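(* Let $\mathfrak{g}$ be a Lie algebra over a field $\mathbb{K}$ and let $\mathfrak{q},\mathfrak{w}$ be Lie subalgebras of $\mathfrak{g}$. Then $$\mathfrak{q}_{\{\mathfrak{w}\}}:=\{Z\in\mathfrak{q}+\mathfrak{w}\mid \mathrm{ad}(\mathfrak{q})^{h}(Z)\subseteq\mathfrak{q}+\mathfrak{w}\ \text{for all } h\ge 0\}$$ is the largest Lie subalgebra $\mathfrak{q}'$ of $\mathfrak{g}$ with $\mathfrak{q}\subseteq\mathfrak{q}'\subseteq\mathfrak{q}+\mathfrak{w}$. In particular, if $\mathfrak{g}$ is a complex Lie algebra, $\sigma$ an anti-$\mathbb{C}$-linear involution of $\mathfrak{g}$ and $\mathfrak{q}$ a complex Lie subalgebra, then $\mathfrak{q}_{\{\sigma(\mathfrak{q})\}}$ is the maximal complex Lie subalgebra $\mathfrak{q}'$ of $\mathfrak{g}$ with $\mathfrak{q}\subseteq\mathfrak{q}'\subseteq\mathfrak{q}+\sigma(\mathfrak{q})$.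
   Context: Here $\mathrm{ad}(\mathfrak{q})^{h}(Z)$ denotes the set of all iterated brackets $[Y_h,[\dots,[Y_1,Z]\dots]]$ with $Y_1,\dots,Y_h\in\mathfrak{q}$ (for $h=0$ it is $\{Z\}$). *)

theory Defs
  imports Complex_Main
begin

locale lie_algebra = vector_space scale
  for scale :: "'k::field \<Rightarrow> 'a::ab_group_add \<Rightarrow> 'a" +
  fixes br :: "'a \<Rightarrow> 'a \<Rightarrow> 'a"
  assumes br_add_left: "br (x + y) z = br x z + br y z"
    and br_add_right: "br x (y + z) = br x y + br x z"
    and br_scale_left: "br (scale c x) y = scale c (br x y)"
    and br_scale_right: "br x (scale c y) = scale c (br x y)"
    and br_alt: "br x x = 0"
    and jacobi: "br x (br y z) + br y (br z x) + br z (br x y) = 0"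

definition lie_subalgebra ::
  "('k::field \<Rightarrow> 'a::ab_group_add \<Rightarrow> 'a) \<Rightarrow> ('a \<Rightarrow> 'a \<Rightarrow> 'a) \<Rightarrow> 'a set \<Rightarrow> bool" where
  "lie_subalgebra scale br S \<longleftrightarrow> module.subspace scale S \<and> (\<forall>x\<in>S. \<forall>y\<in>S. br x y \<in> S)"

definition set_sum :: "'a::plus set \<Rightarrow> 'a set \<Rightarrow> 'a set" where
  "set_sum Q W = {x + y | x y. x \<in> Q \<and> y \<in> W}"

fun ad_iter :: "('a \<Rightarrow> 'a \<Rightarrow> 'a) \<Rightarrow> 'a set \<Rightarrow> nat \<Rightarrow> 'a \<Rightarrow> 'a set" where
  "ad_iter br Q 0 Z = {Z}"
| "ad_iter br Q (Suc h) Z = {br Y X | Y X. Y \<in> Q \<and> X \<in> ad_iter br Q h Z}"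

definition q_brace :: "('a::plus \<Rightarrow> 'a \<Rightarrow> 'a) \<Rightarrow> 'a set \<Rightarrow> 'a set \<Rightarrow> 'a set" where
  "q_brace br Q W = {Z \<in> set_sum Q W. \<forall>h. ad_iter br Q h Z \<subseteq> set_sum Q W}"

end

theory Submission
  imports Defs
begin


context lie_algebra
begin

lemma br_zero_right: "br x 0 = 0"
  using br_add_right[of x 0 0] by simp

lemma br_zero_left: "br 0 x = 0"
  using br_add_left[of 0 0 x] by simp

lemma br_antisym: "br a b = - br b a"
proof -
  have "br (a+b) (a+b) = 0" by (rule br_alt)
  hence "br a a + br a b + (br b a + br b b) = 0"
    by (simp add: br_add_left br_add_right algebra_simps)
  hence "br a b + br b a = 0" by (simp add: br_alt)
  thus ?thesis by (simp add: eq_neg_iff_add_eq_0)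
qed

lemma br_leibniz: "br Y (br x y) = br x (br Y y) + br (br Y x) y"
proof -
  have j: "br Y (br x y) + br x (br y Y) + br y (br Y x) = 0" by (rule jacobi)
  have a1: "br x (br y Y) = - br x (br Y y)"
    using br_antisym[of y Y] br_scale_right[of x "-1" "br Y y"] by simp
  have a2: "br y (br Y x) = - br (br Y x) y" by (rule br_antisym)
  from j a1 a2 show ?thesis by (simp add: algebra_simps eq_neg_iff_add_eq_0)
qed

lemma ad_iter_comp:
  "x \<in> ad_iter br Q h Z' \<Longrightarrow> Z' \<in> ad_iter br Q k Z \<Longrightarrow> x \<in> ad_iter br Q (h + k) Z"
  by (induction h arbitrary: x) auto

lemma ad_iter_add:
  "x \<in> ad_iter br Q h (Z1 + Z2) \<Longrightarrow> \<exists>x1\<in>ad_iter br Q h Z1. \<exists>x2\<in>ad_iter br Q h Z2. x = x1 + x2"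
proof (induction h arbitrary: x)
  case 0 then show ?case by simp
next
  case (Suc h)
  then obtain Y X where "x = br Y X" "Y \<in> Q" "X \<in> ad_iter br Q h (Z1+Z2)" by auto
  with Suc.IH obtain x1 x2 where "x1\<in>ad_iter br Q h Z1" "x2\<in>ad_iter br Q h Z2" "X = x1 + x2"
    by blast
  then show ?case using \<open>x = br Y X\<close> \<open>Y \<in> Q\<close>
    by (auto simp: br_add_right)
qed

lemma ad_iter_scale:
  "x \<in> ad_iter br Q h (scale c Z) \<Longrightarrow> \<exists>x1\<in>ad_iter br Q h Z. x = scale c x1"
proof (induction h arbitrary: x)
  case 0 then show ?case by simp
next
  case (Suc h)
  then obtain Y X where "x = br Y X" "Y \<in> Q" "X \<in> ad_iter br Q h (scale c Z)" by auto
  with Suc.IH obtain x1 where "x1\<in>ad_iter br Q h Z" "X = scale c x1"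
    by blast
  then show ?case using \<open>x = br Y X\<close> \<open>Y \<in> Q\<close>
    by (auto simp: br_scale_right)
qed

lemma main_part:
  assumes q_sub: "lie_subalgebra scale br q"
    and w_sub: "lie_subalgebra scale br w"
  shows "lie_subalgebra scale br (q_brace br q w)
          \<and> q \<subseteq> q_brace br q w \<and> q_brace br q w \<subseteq> set_sum q w
          \<and> (\<forall>q'. lie_subalgebra scale br q' \<and> q \<subseteq> q' \<and> q' \<subseteq> set_sum q w
                  \<longrightarrow> q' \<subseteq> q_brace br q w)"
proof -
  define S where "S = set_sum q w"
  define Q where "Q = q_brace br q w"
  have sq: "subspace q" and sw: "subspace w" and cq: "\<And>x y. x \<in> q \<Longrightarrow> y \<in> q \<Longrightarrow> br x y \<in> q"
    and cw: "\<And>x y. x \<in> w \<Longrightarrow> y \<in> w \<Longrightarrow> br x y \<in> w"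
    using q_sub w_sub by (auto simp: lie_subalgebra_def)
  have sS: "subspace S" unfolding S_def set_sum_def by (rule subspace_sums[OF sq sw])
  have qS: "q \<subseteq> S" unfolding S_def set_sum_def
    using subspace_0[OF sw] by force
  have wS: "w \<subseteq> S" unfolding S_def set_sum_def
    using subspace_0[OF sq] by force
  have QS: "Q \<subseteq> S" unfolding Q_def q_brace_def S_def by auto
  have Qmem: "Z \<in> Q \<longleftrightarrow> (\<forall>h. ad_iter br q h Z \<subseteq> S)" for Z
    unfolding Q_def q_brace_def S_def[symmetric]
    by (auto dest: spec[where x=0])
  have maxi: "q' \<subseteq> Q" if "lie_subalgebra scale br q'" "q \<subseteq> q'" "q' \<subseteq> S" for q'
  proof
    fix Z assume Z: "Z \<in> q'"
    have "ad_iter br q h Z \<subseteq> q'" for h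
    proof (induction h)
      case 0 then show ?case using Z by simp
    next
      case (Suc h) then show ?case using that(1,2) by (auto simp: lie_subalgebra_def)
    qed
    then show "Z \<in> Q" unfolding Qmem using that(3) by blast
  qed
  have qQ: "q \<subseteq> Q" using maxi[OF q_sub _ qS] by simp
  have stab: "br Y Z \<in> Q" if "Y \<in> q" "Z \<in> Q" for Y Z
    unfolding Qmem
  proof (intro allI subsetI)
    fix h x assume "x \<in> ad_iter br q h (br Y Z)"
    moreover have "br Y Z \<in> ad_iter br q 1 Z" using that(1) by auto
    ultimately have "x \<in> ad_iter br q (h+1) Z" by (rule ad_iter_comp)
    then show "x \<in> S" using that(2) Qmem by blast
  qed
  have sQ: "subspace Q"
  proof (rule subspaceI)
    show "0 \<in> Q" using qQ subspace_0[OF sq] by blast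
  next
    fix x y assume x: "x \<in> Q" and y: "y \<in> Q"
    show "x + y \<in> Q" unfolding Qmem
    proof (intro allI subsetI)
      fix h z assume "z \<in> ad_iter br q h (x + y)"
      then obtain x1 x2 where "x1\<in>ad_iter br q h x" "x2\<in>ad_iter br q h y" "z = x1 + x2"
        using ad_iter_add by blast
      then show "z \<in> S" using x y Qmem subspace_add[OF sS] by blast
    qed
  next
    fix c x assume x: "x \<in> Q"
    show "scale c x \<in> Q" unfolding Qmem
    proof (intro allI subsetI)
      fix h z assume "z \<in> ad_iter br q h (scale c x)"
      then obtain x1 where "x1\<in>ad_iter br q h x" "z = scale c x1"
        using ad_iter_scale by blast
      then show "z \<in> S" using x Qmem subspace_scale[OF sS] by blast
    qed
  qed
  define B where "B = {br x' y' | x' y'. x' \<in> Q \<and> y' \<in> Q}"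
  have BS: "B \<subseteq> S"
  proof
    fix z assume "z \<in> B"
    then obtain x' y' where z: "z = br x' y'" "x' \<in> Q" "y' \<in> Q" unfolding B_def by auto
    from z(2) QS obtain a b where ab: "x' = a + b" "a \<in> q" "b \<in> w"
      unfolding S_def set_sum_def by auto
    from z(3) QS obtain c d where cd: "y' = c + d" "c \<in> q" "d \<in> w"
      unfolding S_def set_sum_def by auto
    have bQ: "b \<in> Q" using ab z(2) qQ subspace_diff[OF sQ, of x' a] by auto
    have 1: "br a y' \<in> S" using stab[OF ab(2) z(3)] QS by blast
    have 2: "br b c \<in> S" using stab[OF cd(2) bQ] QS br_antisym[of b c]
      subspace_neg[OF sQ] by auto
    have 3: "br b d \<in> S" using cw[OF ab(3) cd(3)] wS by blast
    have "z = br a y' + (br b c + br b d)"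
      using z(1) ab(1) cd(1) by (simp add: br_add_left br_add_right)
    then show "z \<in> S" using 1 2 3 subspace_add[OF sS] by metis
  qed
  have spanS: "span B \<subseteq> S" by (rule span_minimal[OF BS sS])
  have brspan: "br Y X \<in> span B" if Y: "Y \<in> q" and X: "X \<in> span B" for Y X
  proof -
    have "span B \<subseteq> {X. br Y X \<in> span B}"
    proof (rule span_minimal)
      show "B \<subseteq> {X. br Y X \<in> span B}"
      proof
        fix z assume "z \<in> B"
        then obtain x' y' where z: "z = br x' y'" "x' \<in> Q" "y' \<in> Q" unfolding B_def by auto
        have "br x' (br Y y') \<in> B" using stab[OF Y z(3)] z(2) unfolding B_def by blast
        moreover have "br (br Y x') y' \<in> B" using stab[OF Y z(2)] z(3) unfolding B_def by blast
        moreover have "br Y z = br x' (br Y y') + br (br Y x') y'"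
          unfolding z(1) by (rule br_leibniz)
        ultimately have "br Y z \<in> span B"
          by (simp add: span_add span_base)
        then show "z \<in> {X. br Y X \<in> span B}" by simp
      qed
    next
      show "subspace {X. br Y X \<in> span B}"
        by (rule subspaceI) (auto simp: br_zero_right br_add_right br_scale_right
            span_zero span_add span_scale)
    qed
    then show ?thesis using X by blast
  qed
  have leib: "x \<in> span B" if "x \<in> ad_iter br q h (br u v)" "u \<in> Q" "v \<in> Q" for x h u v
    using that(1)
  proof (induction h arbitrary: x)
    case 0 then show ?case using that(2,3) by (auto simp: B_def intro!: span_base)
  next
    case (Suc h) then show ?case using brspan by auto
  qed
  have closed: "br u v \<in> Q" if "u \<in> Q" "v \<in> Q" for u v
    unfolding Qmem using leib[OF _ that] spanS by blast
  have "lie_subalgebra scale br Q" unfolding lie_subalgebra_def using sQ closed by blast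
  then show ?thesis using qQ QS maxi unfolding Q_def S_def by blast
qed

end

theorem lemma3p5:
  fixes scale :: "'k::field \<Rightarrow> 'a::ab_group_add \<Rightarrow> 'a"
    and br :: "'a \<Rightarrow> 'a \<Rightarrow> 'a"
    and q w :: "'a set"
    and cscale :: "complex \<Rightarrow> 'b::ab_group_add \<Rightarrow> 'b"
    and cbr :: "'b \<Rightarrow> 'b \<Rightarrow> 'b"
    and \<sigma> :: "'b \<Rightarrow> 'b"
    and cq :: "'b set"
  assumes lie: "lie_algebra scale br"
    and q_sub: "lie_subalgebra scale br q"
    and w_sub: "lie_subalgebra scale br w"
    and clie: "lie_algebra cscale cbr"
    and sigma_add: "\<And>x y. \<sigma> (x + y) = \<sigma> x + \<sigma> y"
    and sigma_antilinear: "\<And>c x. \<sigma> (cscale c x) = cscale (cnj c) (\<sigma> x)"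
    and sigma_bracket: "\<And>x y. \<sigma> (cbr x y) = cbr (\<sigma> x) (\<sigma> y)"
    and sigma_involution: "\<And>x. \<sigma> (\<sigma> x) = x"
    and cq_sub: "lie_subalgebra cscale cbr cq"
  shows "(lie_subalgebra scale br (q_brace br q w)
          \<and> q \<subseteq> q_brace br q w \<and> q_brace br q w \<subseteq> set_sum q w
          \<and> (\<forall>q'. lie_subalgebra scale br q' \<and> q \<subseteq> q' \<and> q' \<subseteq> set_sum q w
                  \<longrightarrow> q' \<subseteq> q_brace br q w))
       \<and> (lie_subalgebra cscale cbr (q_brace cbr cq (\<sigma> ` cq))
          \<and> cq \<subseteq> q_brace cbr cq (\<sigma> ` cq) \<and> q_brace cbr cq (\<sigma> ` cq) \<subseteq> set_sum cq (\<sigma> ` cq)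
          \<and> (\<forall>q'. lie_subalgebra cscale cbr q' \<and> cq \<subseteq> q' \<and> q' \<subseteq> set_sum cq (\<sigma> ` cq)
                  \<longrightarrow> q' \<subseteq> q_brace cbr cq (\<sigma> ` cq)))"
  proof -
  have A: "lie_subalgebra scale br (q_brace br q w)
          \<and> q \<subseteq> q_brace br q w \<and> q_brace br q w \<subseteq> set_sum q w
          \<and> (\<forall>q'. lie_subalgebra scale br q' \<and> q \<subseteq> q' \<and> q' \<subseteq> set_sum q w
                  \<longrightarrow> q' \<subseteq> q_brace br q w)"
    by (rule lie_algebra.main_part[OF lie q_sub w_sub])
  have s0: "\<sigma> 0 = 0" using sigma_add[of 0 0] by simp
  have "module.subspace cscale (\<sigma> ` cq)"
  proof -
    interpret cl: lie_algebra cscale cbr by (rule clie)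
    have sc: "cl.subspace cq" using cq_sub by (simp add: lie_subalgebra_def)
    show ?thesis
    proof (rule cl.subspaceI)
      show "0 \<in> \<sigma> ` cq" using s0 cl.subspace_0[OF sc] by (metis image_eqI)
    next
      fix x y assume "x \<in> \<sigma> ` cq" "y \<in> \<sigma> ` cq"
      then obtain a b where "a \<in> cq" "b \<in> cq" "x = \<sigma> a" "y = \<sigma> b" by auto
      then show "x + y \<in> \<sigma> ` cq" using sigma_add[of a b] cl.subspace_add[OF sc]
        by (metis image_eqI)
    next
      fix c x assume "x \<in> \<sigma> ` cq"
      then obtain a where "a \<in> cq" "x = \<sigma> a" by auto
      moreover have "cscale c (\<sigma> a) = \<sigma> (cscale (cnj c) a)"
        using sigma_antilinear[of "cnj c" a] by simp
      ultimately show "cscale c x \<in> \<sigma> ` cq" using cl.subspace_scale[OF sc]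
        by (metis image_eqI)
    qed
  qed
  moreover have "\<forall>x\<in>\<sigma> ` cq. \<forall>y\<in>\<sigma> ` cq. cbr x y \<in> \<sigma> ` cq"
    using cq_sub sigma_bracket unfolding lie_subalgebra_def
    by (metis (no_types, lifting) image_iff)
  ultimately have sq: "lie_subalgebra cscale cbr (\<sigma> ` cq)"
    unfolding lie_subalgebra_def by blast
  have B: "lie_subalgebra cscale cbr (q_brace cbr cq (\<sigma> ` cq))
          \<and> cq \<subseteq> q_brace cbr cq (\<sigma> ` cq) \<and> q_brace cbr cq (\<sigma> ` cq) \<subseteq> set_sum cq (\<sigma> ` cq)
          \<and> (\<forall>q'. lie_subalgebra cscale cbr q' \<and> cq \<subseteq> q' \<and> q' \<subseteq> set_sum cq (\<sigma> ` cq)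
                  \<longrightarrow> q' \<subseteq> q_brace cbr cq (\<sigma> ` cq))"
    by (rule lie_algebra.main_part[OF clie cq_sub sq])
  from A B show ?thesis by blast
qed

end
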